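(* Let $I\subsetneq\Bbbk[x_0,\dots,x_n]$ be a proper saturated Borel ideal. Then there exists $j\in\mathbb{N}$ such that $P_{\lambda(I)}=\sigma^j\lambda(P_I)$.
   Context: $\Bbbk$ is an algebraically closed field; $P_J$ is the Hilbert polynomial of the quotient of the ambient polynomial ring by $J$. A monomial ideal $I$ is Borel if for every monomial $m\in I$, every $x_j\mid m$ and every $i<j$, $mx_i/x_j\in I$; it is saturated if $(I:\langle x_0,\dots,x_n\rangle^\infty)=I$. The extension of $I$ is $\lambda(I):=I\cdot\Bbbk[x_0,\dots,x_{n+1}]$. Binomial coefficients are polynomials: $\binom{t+a}{b}=\frac{(t+a)\cdots(t+a-b+1)}{b!}$ for $b\ge0$, $0$ for $b<0$. An admissible Hilbert polynomial (Hilbert polynomial of a nonempty closed subscheme of a projective space) has a unique Gotzmann expression $P(t)=\sum_{j=1}^r\binom{t+b_j-(j-1)}{b_j}$, $b_1\ge\dots\ge b_r\ge0$; $\lambda(P)$ is the admissible polynomial $\sum_{j=1}^r\binom{t+b_j+1-(j-1)}{b_j+1}$, and $\sigma(P):=1+P$. *)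

theory Defs
  imports "HOL-Computational_Algebra.Polynomial"
begin

text \<open>Monomials of k[x_0,...,x_n] are exponent vectors u :: nat => nat with u i = 0 for i > n.
  A monomial ideal is identified with the set of monomials it contains (these form a
  K-basis of the ideal); the quotient S/I then has as K-basis the monomials not in I.\<close>

definition mons :: "nat \<Rightarrow> (nat \<Rightarrow> nat) set" where
  "mons n = {u. \<forall>i>n. u i = 0}"

definition mdeg :: "nat \<Rightarrow> (nat \<Rightarrow> nat) \<Rightarrow> nat" where
  "mdeg n u = (\<Sum>i\<le>n. u i)"

definition mono_ideal :: "nat \<Rightarrow> (nat \<Rightarrow> nat) set \<Rightarrow> bool" where
  "mono_ideal n I \<longleftrightarrow> I \<subseteq> mons n \<and>
     (\<forall>u\<in>I. \<forall>v\<in>mons n. (\<forall>i. u i \<le> v i) \<longrightarrow> v \<in> I)"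

definition borel :: "nat \<Rightarrow> (nat \<Rightarrow> nat) set \<Rightarrow> bool" where
  "borel n I \<longleftrightarrow> (\<forall>u\<in>I. \<forall>i j. i < j \<and> j \<le> n \<and> 0 < u j \<longrightarrow>
      u(i := u i + 1, j := u j - 1) \<in> I)"

text \<open>Saturation (I : m^\<infinity>) = union over k of (I : m^k); a monomial u lies in (I : m^k)
  iff u*v \<in> I for every monomial v of degree k.\<close>
definition saturation :: "nat \<Rightarrow> (nat \<Rightarrow> nat) set \<Rightarrow> (nat \<Rightarrow> nat) set" where
  "saturation n I = {u \<in> mons n. \<exists>k. \<forall>v\<in>mons n. mdeg n v = k \<longrightarrow> (\<lambda>i. u i + v i) \<in> I}"

definition saturated :: "nat \<Rightarrow> (nat \<Rightarrow> nat) set \<Rightarrow> bool" where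
  "saturated n I \<longleftrightarrow> saturation n I = I"

definition proper_ideal :: "nat \<Rightarrow> (nat \<Rightarrow> nat) set \<Rightarrow> bool" where
  "proper_ideal n I \<longleftrightarrow> I \<noteq> mons n"

definition ext_ideal :: "nat \<Rightarrow> (nat \<Rightarrow> nat) set \<Rightarrow> (nat \<Rightarrow> nat) set" where
  "ext_ideal n I = {u \<in> mons (Suc n). \<exists>v\<in>I. \<forall>i. v i \<le> u i}"

definition hilb_fun :: "nat \<Rightarrow> (nat \<Rightarrow> nat) set \<Rightarrow> nat \<Rightarrow> nat" where
  "hilb_fun n I t = card {u \<in> mons n. mdeg n u = t \<and> u \<notin> I}"

definition hilb_poly :: "nat \<Rightarrow> (nat \<Rightarrow> nat) set \<Rightarrow> rat poly" where
  "hilb_poly n I = (THE p. \<forall>\<^sub>F t in sequentially. poly p (of_nat t) = of_nat (hilb_fun n I t))"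

text \<open>Binomial coefficient as polynomial in t: binom(t+a, b) = (t+a)...(t+a-b+1)/b!.\<close>
definition binom_poly :: "int \<Rightarrow> nat \<Rightarrow> rat poly" where
  "binom_poly a b = smult (1 / fact b) (\<Prod>i<b. [:of_int a - of_nat i, 1:])"

text \<open>Gotzmann expression P = sum_{j=1}^r binom(t + b_j - (j-1), b_j), b_1 \<ge> ... \<ge> b_r \<ge> 0
  (list index 0-based, so index j below corresponds to j+1 in the paper).\<close>
definition gotzmann :: "rat poly \<Rightarrow> nat list \<Rightarrow> bool" where
  "gotzmann P bs \<longleftrightarrow> sorted_wrt (\<ge>) bs \<and>
     P = (\<Sum>j<length bs. binom_poly (int (bs ! j) - int j) (bs ! j))"

definition lam_poly :: "rat poly \<Rightarrow> rat poly" where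
  "lam_poly P = (let bs = (THE bs. gotzmann P bs) in
     (\<Sum>j<length bs. binom_poly (int (bs ! j) + 1 - int j) (bs ! j + 1)))"

definition sigma_poly :: "rat poly \<Rightarrow> rat poly" where
  "sigma_poly P = 1 + P"

end

theory Submission
  imports Defs "HOL-Library.FuncSet"
begin

lemma poly_binom: "poly (binom_poly a b) x = (x + of_int a) gchoose b"
  unfolding binom_poly_def gbinomial_prod_rev
  by (simp add: poly_prod atLeast0LessThan algebra_simps)

lemma poly_binom_nat:
  assumes "int t + a \<ge> 0"
  shows "poly (binom_poly a b) (of_nat t) = of_nat (nat (int t + a) choose b)"
proof -
  have "(of_nat (nat (int t + a)) :: rat) = of_nat t + of_int a"
    using assms by (metis of_int_of_nat_eq of_int_add of_nat_nat)
  then show ?thesis by (simp add: poly_binom binomial_gbinomial)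
qed

lemma binom_poly_deg_coeff:
  "degree (binom_poly a b) \<le> b \<and> coeff (binom_poly a b) b = 1 / fact b"
proof -
  define Q where "Q = (\<Prod>i<b. [:of_int a - of_nat i, 1:] :: rat poly)"
  have dQ: "degree Q = b"
    unfolding Q_def by (subst degree_prod_eq_sum_degree) auto
  have lQ: "lead_coeff Q = 1"
    unfolding Q_def by (simp add: lead_coeff_prod)
  have "binom_poly a b = smult (1 / fact b) Q" unfolding binom_poly_def Q_def by simp
  then show ?thesis using dQ lQ by simp
qed

lemma binom_poly_coeff_nonneg:
  assumes "c \<le> b" shows "coeff (binom_poly a c) b \<ge> 0"
proof (cases "c < b")
  case True
  then have "coeff (binom_poly a c) b = 0"
    using binom_poly_deg_coeff[of a c] by (intro coeff_eq_0) auto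
  then show ?thesis by simp
next
  case False
  then have "c = b" using assms by simp
  then show ?thesis using binom_poly_deg_coeff[of a c] by simp
qed

definition Gz :: "nat list \<Rightarrow> rat poly" where
  "Gz bs = (\<Sum>j<length bs. binom_poly (int (bs ! j) - int j) (bs ! j))"

lemma gotzmann_iff: "gotzmann P bs \<longleftrightarrow> sorted_wrt (\<ge>) bs \<and> P = Gz bs"
  unfolding gotzmann_def Gz_def by simp

lemma Gz_Nil: "Gz [] = 0" by (simp add: Gz_def)

lemma Gz_Cons_poly:
  "poly (Gz (b # bs)) x = poly (binom_poly (int b) b) x + poly (Gz bs) (x - 1)"
proof -
  have "Gz (b # bs) = binom_poly (int b) b +
     (\<Sum>j<length bs. binom_poly (int (bs ! j) - int (Suc j)) (bs ! j))"
    unfolding Gz_def by (simp add: sum.lessThan_Suc_shift del: sum.lessThan_Suc)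
  moreover have "poly (binom_poly (int c - int (Suc j)) c) x
      = poly (binom_poly (int c - int j) c) (x - 1)" for c j
    by (simp add: poly_binom algebra_simps)
  ultimately show ?thesis
    by (simp add: Gz_def poly_sum)
qed

lemma Gz_Cons_coeff:
  assumes "\<forall>c\<in>set bs. c \<le> b"
  shows "degree (Gz (b # bs)) \<le> b \<and> coeff (Gz (b # bs)) b > 0"
proof -
  have le: "(b # bs) ! j \<le> b" if "j < Suc (length bs)" for j
    using that assms by (cases j) auto
  have "degree (Gz (b # bs)) \<le> b"
    unfolding Gz_def
  proof (rule degree_sum_le)
    fix p assume "p \<in> {..<length (b # bs)}"
    then have "(b # bs) ! p \<le> b" using le by simp
    then show "degree (binom_poly (int ((b # bs) ! p) - int p) ((b # bs) ! p)) \<le> b"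
      using binom_poly_deg_coeff le_trans by blast
  qed simp
  moreover have "coeff (Gz (b # bs)) b =
      coeff (binom_poly (int b) b) b +
      (\<Sum>j<length bs. coeff (binom_poly (int (bs ! j) - int (Suc j)) (bs ! j)) b)"
    unfolding Gz_def coeff_sum by (simp add: sum.lessThan_Suc_shift del: sum.lessThan_Suc)
  moreover have "(\<Sum>j<length bs. coeff (binom_poly (int (bs ! j) - int (Suc j)) (bs ! j)) b) \<ge> 0"
    using assms by (intro sum_nonneg binom_poly_coeff_nonneg) auto
  moreover have "coeff (binom_poly (int b) b) b > 0"
    using binom_poly_deg_coeff[of "int b" b] by simp
  ultimately show ?thesis by linarith
qed

lemma Gz_unique:
  "sorted_wrt (\<ge>) bs \<Longrightarrow> sorted_wrt (\<ge>) bs' \<Longrightarrow> Gz bs = Gz bs' \<Longrightarrow> bs = bs'"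
proof (induction bs arbitrary: bs')
  case Nil
  then show ?case
  proof (cases bs')
    case (Cons b' r')
    then have "coeff (Gz bs') b' > 0" using Nil.prems Gz_Cons_coeff[of r' b'] by simp
    then show ?thesis using Nil.prems by (simp add: Gz_Nil)
  qed simp
next
  case (Cons b r)
  show ?case
  proof (cases bs')
    case Nil
    then have "coeff (Gz (b # r)) b > 0" using Cons.prems Gz_Cons_coeff[of r b] by simp
    then show ?thesis using Cons.prems Nil by (simp add: Gz_Nil)
  next
    case Cons2: (Cons b' r')
    have A: "degree (Gz (b # r)) \<le> b \<and> coeff (Gz (b # r)) b > 0"
      using Cons.prems Gz_Cons_coeff[of r b] by simp
    have B: "degree (Gz (b' # r')) \<le> b' \<and> coeff (Gz (b' # r')) b' > 0"
      using Cons.prems Cons2 Gz_Cons_coeff[of r' b'] by simp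
    have E: "Gz (b # r) = Gz (b' # r')" using Cons.prems Cons2 by simp
    have "b = b'"
    proof (rule ccontr)
      assume "b \<noteq> b'"
      then have "b < b' \<or> b' < b" by auto
      then show False
        using A B E coeff_eq_0[of "Gz (b # r)" b'] coeff_eq_0[of "Gz (b' # r')" b]
        by (metis le_less_trans less_irrefl)
    qed
    have "poly (Gz r) (x - 1) = poly (Gz r') (x - 1)" for x
      using E Gz_Cons_poly[of b r x] Gz_Cons_poly[of b' r' x] \<open>b = b'\<close> by simp
    then have "poly (Gz r) y = poly (Gz r') y" for y
      using add_diff_cancel[of y 1] by metis
    then have "Gz r = Gz r'" using poly_eq_poly_eq_iff by blast
    moreover have "sorted_wrt (\<ge>) r" "sorted_wrt (\<ge>) r'"
      using Cons.prems Cons2 by auto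
    ultimately have "r = r'" using Cons.IH by blast
    then show ?thesis using Cons2 \<open>b = b'\<close> by simp
  qed
qed


definition Gl :: "nat list \<Rightarrow> rat poly" where
  "Gl bs = (\<Sum>j<length bs. binom_poly (int (bs ! j) + 1 - int j) (bs ! j + 1))"

definition hb :: "nat list \<Rightarrow> nat \<Rightarrow> nat" where
  "hb bs t = (\<Sum>j<length bs. if j \<le> t then (t - j + bs ! j) choose (bs ! j) else 0)"

lemma Gz_eval:
  assumes "length bs \<le> Suc t"
  shows "poly (Gz bs) (of_nat t) = of_nat (hb bs t)"
proof -
  have "poly (binom_poly (int (bs ! j) - int j) (bs ! j)) (of_nat t) =
        of_nat (if j \<le> t then (t - j + bs ! j) choose (bs ! j) else 0)" if "j < length bs" for j
  proof -
    have "j \<le> t" using that assms by simp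
    then have "nat (int t + (int (bs ! j) - int j)) = t - j + bs ! j" by simp
    then show ?thesis using \<open>j \<le> t\<close> by (simp add: poly_binom_nat)
  qed
  then show ?thesis unfolding Gz_def hb_def poly_sum of_nat_sum
    by (intro sum.cong) auto
qed

lemma Gl_eval:
  assumes "length bs \<le> Suc t"
  shows "poly (Gl bs) (of_nat t) = of_nat (hb (map Suc bs) t)"
proof -
  have "poly (binom_poly (int (bs ! j) + 1 - int j) (bs ! j + 1)) (of_nat t) =
        of_nat (if j \<le> t then (t - j + map Suc bs ! j) choose (map Suc bs ! j) else 0)"
    if "j < length bs" for j
  proof -
    have "j \<le> t" using that assms by simp
    then have "nat (int t + (int (bs ! j) + 1 - int j)) = t - j + Suc (bs ! j)" by simp
    then show ?thesis using \<open>j \<le> t\<close> that by (simp add: poly_binom_nat)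
  qed
  then show ?thesis unfolding Gl_def hb_def poly_sum of_nat_sum
    by (intro sum.cong) auto
qed

lemma lam_Gz:
  assumes "sorted_wrt (\<ge>) bs"
  shows "lam_poly (Gz bs) = Gl bs"
proof -
  have "(THE bs'. gotzmann (Gz bs) bs') = bs"
    using assms Gz_unique by (intro the_equality) (auto simp: gotzmann_iff)
  then show ?thesis unfolding lam_poly_def Gl_def Let_def by simp
qed

lemma sigma_pow: "(sigma_poly ^^ j) p = of_nat j + p"
  by (induction j) (simp_all add: sigma_poly_def)

lemma hilb_poly_eq:
  assumes "\<And>t. t \<ge> T \<Longrightarrow> poly p (of_nat t) = of_nat (hilb_fun n I t)"
  shows "hilb_poly n I = p"
  unfolding hilb_poly_def
proof (rule the_equality)
  show "\<forall>\<^sub>F t in sequentially. poly p (of_nat t) = of_nat (hilb_fun n I t)"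
    using assms by (auto simp: eventually_sequentially)
next
  fix q :: "rat poly" assume "\<forall>\<^sub>F t in sequentially. poly q (of_nat t) = of_nat (hilb_fun n I t)"
  then obtain T' where T': "\<And>t. t \<ge> T' \<Longrightarrow> poly q (of_nat t) = of_nat (hilb_fun n I t)"
    by (auto simp: eventually_sequentially)
  show "q = p"
  proof (rule ccontr)
    assume "q \<noteq> p"
    then have "q - p \<noteq> 0" by simp
    then have fin: "finite {x. poly (q - p) x = 0}" by (rule poly_roots_finite)
    have "of_nat ` {max T T'..} \<subseteq> {x. poly (q - p) x = (0::rat)}"
      using assms T' by auto
    moreover have "infinite (of_nat ` {max T T'..} :: rat set)"
    proof
      assume "finite (of_nat ` {max T T'..} :: rat set)"
      then have "finite {max T T'..}"
        by (rule finite_imageD) (auto simp: inj_on_def)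
      then show False using infinite_Ici by blast
    qed
    ultimately show False using fin finite_subset by blast
  qed
qed

lemma hb_term_sum:
  "(\<Sum>s\<le>t. if j \<le> s then (s - j + b) choose b else 0) =
   (if j \<le> t then (t - j + Suc b) choose Suc b else (0::nat))"
proof (induction t)
  case 0
  then show ?case by simp
next
  case (Suc t)
  show ?case
  proof (cases "j \<le> t")
    case True
    then have "Suc t - j + b = Suc (t - j + b)" by simp
    then show ?thesis using Suc True by (simp add: Suc_diff_le)
  next
    case False
    then show ?thesis using Suc by (cases "j = Suc t") auto
  qed
qed

lemma hb_sum: "(\<Sum>s\<le>t. hb bs s) = hb (map Suc bs) t"
  unfolding hb_def
  by (subst sum.swap) (auto simp: hb_term_sum intro!: sum.cong)

definition monsd :: "nat \<Rightarrow> nat \<Rightarrow> (nat \<Rightarrow> nat) set" where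
  "monsd n t = {u \<in> mons n. mdeg n u = t}"

definition stdm :: "nat \<Rightarrow> (nat \<Rightarrow> nat) set \<Rightarrow> nat \<Rightarrow> (nat \<Rightarrow> nat) set" where
  "stdm n I t = {u \<in> mons n. mdeg n u = t \<and> u \<notin> I}"

lemma hilb_fun_stdm: "hilb_fun n I t = card (stdm n I t)"
  unfolding hilb_fun_def stdm_def by simp

lemma mons_le: "u \<in> mons n \<Longrightarrow> i \<le> n \<Longrightarrow> u i \<le> mdeg n u"
  unfolding mdeg_def by (rule member_le_sum) auto

lemma finite_monsd: "finite (monsd n t)"
proof (rule inj_on_finite)
  show "inj_on (\<lambda>u. restrict u {..n}) (monsd n t)"
  proof (rule inj_onI)
    fix u v assume u: "u \<in> monsd n t" and v: "v \<in> monsd n t"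
      and e: "restrict u {..n} = restrict v {..n}"
    show "u = v"
    proof (rule ext)
      fix i show "u i = v i"
      proof (cases "i \<le> n")
        case True
        then show ?thesis using fun_cong[OF e, of i] by simp
      next
        case False
        then show ?thesis using u v unfolding monsd_def mons_def by simp
      qed
    qed
  qed
  show "(\<lambda>u. restrict u {..n}) ` monsd n t \<subseteq> PiE {..n} (\<lambda>_. {..t})"
  proof
    fix x assume "x \<in> (\<lambda>u. restrict u {..n}) ` monsd n t"
    then obtain u where u: "u \<in> monsd n t" and x: "x = restrict u {..n}" by blast
    have "\<forall>i\<in>{..n}. u i \<in> {..t}" using u mons_le[of u n] unfolding monsd_def by auto
    then show "x \<in> PiE {..n} (\<lambda>_. {..t})" unfolding x by simp
  qed
  show "finite (PiE {..n} (\<lambda>_. {..t}))" by (rule finite_PiE) auto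
qed

lemma finite_stdm: "finite (stdm n I t)"
  by (rule finite_subset[OF _ finite_monsd[of n t]]) (auto simp: stdm_def monsd_def)

lemma mdeg_add: "mdeg n (\<lambda>i. u i + v i) = mdeg n u + mdeg n v"
  unfolding mdeg_def by (simp add: sum.distrib)

lemma mons_add: "u \<in> mons n \<Longrightarrow> v \<in> mons n \<Longrightarrow> (\<lambda>i. u i + v i) \<in> mons n"
  unfolding mons_def by auto

lemma mdeg_upd: "i \<le> n \<Longrightarrow> mdeg n (u(i := x)) + u i = mdeg n u + x"
proof -
  assume i: "i \<le> n"
  have "mdeg n (u(i := x)) = x + (\<Sum>j\<in>{..n} - {i}. (u(i := x)) j)"
    unfolding mdeg_def using i by (subst sum.remove[of _ i]) auto
  moreover have "mdeg n u = u i + (\<Sum>j\<in>{..n} - {i}. u j)"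
    unfolding mdeg_def using i by (subst sum.remove[of _ i]) auto
  moreover have "(\<Sum>j\<in>{..n} - {i}. (u(i := x)) j) = (\<Sum>j\<in>{..n} - {i}. u j)"
    by (rule sum.cong) auto
  ultimately show ?thesis by simp
qed

lemma deg0: "v \<in> mons n \<Longrightarrow> mdeg n v = 0 \<Longrightarrow> v = (\<lambda>_. 0)"
proof (rule ext)
  fix i assume v: "v \<in> mons n" "mdeg n v = 0"
  show "v i = 0"
  proof (cases "i \<le> n")
    case True
    then show ?thesis using v unfolding mdeg_def by simp
  next
    case False
    then show ?thesis using v unfolding mons_def by simp
  qed
qed

lemma mdeg_zero: "mdeg n (\<lambda>_. 0) = 0" by (simp add: mdeg_def)
lemma mons_zero: "(\<lambda>_. 0) \<in> mons n" by (simp add: mons_def)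

lemma submon:
  "v \<in> mons n \<Longrightarrow> d \<le> mdeg n v \<Longrightarrow> \<exists>w\<in>mons n. (\<forall>i. w i \<le> v i) \<and> mdeg n w = d"
proof (induction d)
  case 0
  then show ?case using mons_zero mdeg_zero by (intro bexI[of _ "\<lambda>_. 0"]) auto
next
  case (Suc d)
  then obtain w where w: "w \<in> mons n" "\<forall>i. w i \<le> v i" "mdeg n w = d" by auto
  have "\<exists>i\<le>n. w i < v i"
  proof (rule ccontr)
    assume "\<not> ?thesis"
    then have "\<forall>i\<le>n. v i \<le> w i" by auto
    then have "mdeg n v \<le> mdeg n w" unfolding mdeg_def by (intro sum_mono) auto
    then show False using Suc.prems w by simp
  qed
  then obtain i where i: "i \<le> n" "w i < v i" by auto
  define w' where "w' = w(i := w i + 1)"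
  have "mdeg n w' + w i = mdeg n w + (w i + 1)" unfolding w'_def by (rule mdeg_upd[OF i(1)])
  then have "mdeg n w' = Suc d" using w by simp
  moreover have "w' \<in> mons n" using w(1) i(1) unfolding w'_def mons_def by simp
  moreover have "\<forall>j. w' j \<le> v j" using w(2) i(2) unfolding w'_def by simp
  ultimately show ?case by blast
qed

lemma mono_idealD: "mono_ideal n I \<Longrightarrow> u \<in> I \<Longrightarrow> v \<in> mons n \<Longrightarrow> (\<forall>i. u i \<le> v i) \<Longrightarrow> v \<in> I"
  unfolding mono_ideal_def by blast

lemma mono_ideal_sub: "mono_ideal n I \<Longrightarrow> I \<subseteq> mons n"
  unfolding mono_ideal_def by blast

lemma sat_up:
  assumes "mono_ideal n J" "u \<in> mons n" "\<forall>v\<in>mons n. mdeg n v = k \<longrightarrow> (\<lambda>i. u i + v i) \<in> J"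
    "k \<le> k'" "v \<in> mons n" "mdeg n v = k'"
  shows "(\<lambda>i. u i + v i) \<in> J"
proof -
  obtain w where w: "w \<in> mons n" "\<forall>i. w i \<le> v i" "mdeg n w = k"
    using submon[of v n k] assms by auto
  then have "(\<lambda>i. u i + w i) \<in> J" using assms by auto
  show ?thesis
    by (rule mono_idealD[OF assms(1) \<open>(\<lambda>i. u i + w i) \<in> J\<close> mons_add[OF assms(2) assms(5)]])
      (use w in auto)
qed

lemma sat_sup: "mono_ideal n I \<Longrightarrow> I \<subseteq> saturation n I"
proof
  fix u assume I: "mono_ideal n I" and u: "u \<in> I"
  have "\<forall>v\<in>mons n. mdeg n v = 0 \<longrightarrow> (\<lambda>i. u i + v i) \<in> I"
  proof (intro ballI impI)
    fix v assume "v \<in> mons n" "mdeg n v = 0"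
    then have "v = (\<lambda>_. 0)" by (rule deg0)
    then show "(\<lambda>i. u i + v i) \<in> I" using u by simp
  qed
  then show "u \<in> saturation n I" using u mono_ideal_sub[OF I] unfolding saturation_def by blast
qed

lemma sat_mono:
  assumes J: "mono_ideal n J"
  shows "mono_ideal n (saturation n J)"
proof -
  have "v \<in> saturation n J" if u: "u \<in> saturation n J" and v: "v \<in> mons n"
    and le: "\<forall>i. u i \<le> v i" for u v
  proof -
    obtain k where k: "\<forall>w\<in>mons n. mdeg n w = k \<longrightarrow> (\<lambda>i. u i + w i) \<in> J"
      using u unfolding saturation_def by auto
    have "\<forall>w\<in>mons n. mdeg n w = k \<longrightarrow> (\<lambda>i. v i + w i) \<in> J"
    proof (intro ballI impI)
      fix w assume w: "w \<in> mons n" "mdeg n w = k"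
      then have "(\<lambda>i. u i + w i) \<in> J" using k by blast
      then show "(\<lambda>i. v i + w i) \<in> J"
        by (rule mono_idealD[OF J _ mons_add[OF v w(1)]]) (use le in auto)
    qed
    then show ?thesis using v unfolding saturation_def by blast
  qed
  then show ?thesis unfolding mono_ideal_def saturation_def by blast
qed

lemma sat_borel:
  assumes "borel n J" "mono_ideal n J"
  shows "borel n (saturation n J)"
  unfolding borel_def
proof (intro ballI allI impI)
  fix u i j assume u: "u \<in> saturation n J" and ij: "i < j \<and> j \<le> n \<and> 0 < u j"
  then obtain k where k: "\<forall>v\<in>mons n. mdeg n v = k \<longrightarrow> (\<lambda>l. u l + v l) \<in> J" and um: "u \<in> mons n"
    unfolding saturation_def by auto
  let ?u = "u(i := u i + 1, j := u j - 1)"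
  have "?u \<in> mons n" using um ij unfolding mons_def by auto
  moreover have "\<forall>v\<in>mons n. mdeg n v = k \<longrightarrow> (\<lambda>l. ?u l + v l) \<in> J"
  proof (intro ballI impI)
    fix v assume "v \<in> mons n" "mdeg n v = k"
    then have "(\<lambda>l. u l + v l) \<in> J" using k by auto
    then have "(\<lambda>l. u l + v l)(i := u i + v i + 1, j := u j + v j - 1) \<in> J"
    proof -
      have B: "\<And>w. w \<in> J \<Longrightarrow> 0 < w j \<Longrightarrow> w(i := w i + 1, j := w j - 1) \<in> J"
        using assms(1) ij unfolding borel_def by blast
      have "0 < u j + v j" using ij by simp
      from B[OF \<open>(\<lambda>l. u l + v l) \<in> J\<close>] this show ?thesis by simp
    qed
    moreover have "(\<lambda>l. u l + v l)(i := u i + v i + 1, j := u j + v j - 1) = (\<lambda>l. ?u l + v l)"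
    proof (rule ext)
      fix l show "((\<lambda>l. u l + v l)(i := u i + v i + 1, j := u j + v j - 1)) l = ?u l + v l"
        using ij by (cases "l = i"; cases "l = j") auto
    qed
    ultimately show "(\<lambda>l. ?u l + v l) \<in> J" by simp
  qed
  ultimately show "?u \<in> saturation n J" unfolding saturation_def by blast
qed

lemma sat_sat:
  assumes J: "mono_ideal n J"
  shows "saturated n (saturation n J)"
  unfolding saturated_def
proof
  show "saturation n (saturation n J) \<subseteq> saturation n J"
  proof
    fix u assume "u \<in> saturation n (saturation n J)"
    then obtain k where um: "u \<in> mons n" and
      k: "\<forall>v\<in>mons n. mdeg n v = k \<longrightarrow> (\<lambda>i. u i + v i) \<in> saturation n J"
      unfolding saturation_def by auto
    have "\<forall>v\<in>monsd n k. \<exists>kv. \<forall>w\<in>mons n. mdeg n w = kv \<longrightarrow> (\<lambda>i. u i + v i + w i) \<in> J"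
    proof
      fix v assume "v \<in> monsd n k"
      then have "(\<lambda>i. u i + v i) \<in> saturation n J" using k by (simp add: monsd_def)
      then show "\<exists>kv. \<forall>w\<in>mons n. mdeg n w = kv \<longrightarrow> (\<lambda>i. u i + v i + w i) \<in> J"
        by (simp add: saturation_def)
    qed
    from bchoice[OF this] obtain kf where kf: "\<forall>v\<in>monsd n k. \<forall>w\<in>mons n. mdeg n w = kf v \<longrightarrow> (\<lambda>i. u i + v i + w i) \<in> J"
      by blast
    define K where "K = (\<Sum>v\<in>monsd n k. kf v)"
    have "\<forall>z\<in>mons n. mdeg n z = k + K \<longrightarrow> (\<lambda>i. u i + z i) \<in> J"
    proof (intro ballI impI)
      fix z assume z: "z \<in> mons n" "mdeg n z = k + K"
      obtain v where v: "v \<in> mons n" "\<forall>i. v i \<le> z i" "mdeg n v = k"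
        using submon[OF z(1), of k] z by auto
      define w where "w = (\<lambda>i. z i - v i)"
      have zvw: "z = (\<lambda>i. v i + w i)"
      proof (rule ext)
        fix i show "z i = v i + w i" using v(2)[rule_format, of i] unfolding w_def by simp
      qed
      have wm: "w \<in> mons n" using z unfolding w_def mons_def by auto
      have "mdeg n w = K" using z v zvw mdeg_add[of n v w] by simp
      moreover have "kf v \<le> K" unfolding K_def
        using v finite_monsd by (intro member_le_sum) (auto simp: monsd_def)
      moreover have uvm: "(\<lambda>i. u i + v i) \<in> mons n" using mons_add um v(1) by blast
      moreover have "\<forall>w\<in>mons n. mdeg n w = kf v \<longrightarrow> (\<lambda>i. (\<lambda>i. u i + v i) i + w i) \<in> J"
        using kf v by (auto simp: monsd_def)
      ultimately have "(\<lambda>i. (\<lambda>i. u i + v i) i + w i) \<in> J"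
        using sat_up[OF J uvm, of "kf v" K w] wm by blast
      then show "(\<lambda>i. u i + z i) \<in> J" by (simp add: zvw add.assoc)
    qed
    then show "u \<in> saturation n J" using um unfolding saturation_def by blast
  qed
  show "saturation n J \<subseteq> saturation n (saturation n J)"
    by (rule sat_sup[OF sat_mono[OF J]])
qed

lemma mdeg_Suc: "mdeg (Suc m) u = mdeg m u + u (Suc m)"
  unfolding mdeg_def by simp

lemma mons_Suc_iff: "(u \<in> mons (Suc m) \<and> u (Suc m) = 0) \<longleftrightarrow> u \<in> mons m"
  unfolding mons_def by (auto simp: Suc_le_eq) (metis Suc_lessI)

lemma mons_Suc: "u \<in> mons m \<Longrightarrow> u \<in> mons (Suc m)"
  using mons_Suc_iff by blast

lemma exists_pos: "v \<in> mons n \<Longrightarrow> 0 < mdeg n v \<Longrightarrow> \<exists>i\<le>n. 0 < v i"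
proof (rule ccontr)
  assume "v \<in> mons n" "0 < mdeg n v" "\<not> (\<exists>i\<le>n. 0 < v i)"
  then have "mdeg n v = 0" unfolding mdeg_def by simp
  then show False using \<open>0 < mdeg n v\<close> by simp
qed

lemma xn_prop:
  assumes I: "mono_ideal n I" and B: "borel n I" and S: "saturated n I"
    and u: "u \<in> I" and pos: "0 < u n"
  shows "u(n := u n - 1) \<in> I"
proof -
  define w where "w = u(n := u n - 1)"
  have um: "u \<in> mons n" using u mono_ideal_sub[OF I] by blast
  have wm: "w \<in> mons n" using um unfolding w_def mons_def by simp
  have "\<forall>v\<in>mons n. mdeg n v = 1 \<longrightarrow> (\<lambda>i. w i + v i) \<in> I"
  proof (intro ballI impI)
    fix v assume v: "v \<in> mons n" "mdeg n v = 1"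
    then obtain i where i: "i \<le> n" "0 < v i" using exists_pos by fastforce
    have wv: "(\<lambda>i. w i + v i) \<in> mons n" using mons_add[OF wm v(1)] .
    show "(\<lambda>i. w i + v i) \<in> I"
    proof (cases "i = n")
      case True
      have "\<forall>j. u j \<le> w j + v j"
      proof
        fix j show "u j \<le> w j + v j"
          using i True pos unfolding w_def by (cases "j = n") auto
      qed
      then show ?thesis using mono_idealD[OF I u wv] by blast
    next
      case False
      then have "i < n" using i by simp
      then have z: "u(i := u i + 1, n := u n - 1) \<in> I"
        using B u pos unfolding borel_def by blast
      have "\<forall>j. (u(i := u i + 1, n := u n - 1)) j \<le> w j + v j"
      proof
        fix j show "(u(i := u i + 1, n := u n - 1)) j \<le> w j + v j"
          using i False unfolding w_def by (cases "j = n"; cases "j = i") auto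
      qed
      then show ?thesis using mono_idealD[OF I z wv] by blast
    qed
  qed
  then have "w \<in> saturation n I" using wm unfolding saturation_def by blast
  then show ?thesis using S unfolding saturated_def w_def by simp
qed

lemma mons_m_zero: "u \<in> mons m \<Longrightarrow> u (Suc m) = 0"
  unfolding mons_def by simp

lemma stdm_iff: "u \<in> stdm n I t \<longleftrightarrow> u \<in> mons n \<and> mdeg n u = t \<and> u \<notin> I"
  unfolding stdm_def by simp

lemma count_split:
  assumes Jdef: "J = {u \<in> I'. u (Suc m) = 0}"
  shows "hilb_fun (Suc m) I' t' = hilb_fun m J t' + card {u \<in> stdm (Suc m) I' t'. 0 < u (Suc m)}"
proof -
  have split: "stdm (Suc m) I' t' = stdm m J t' \<union> {u \<in> stdm (Suc m) I' t'. 0 < u (Suc m)}"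
  proof (rule set_eqI)
    fix u
    show "u \<in> stdm (Suc m) I' t' \<longleftrightarrow> u \<in> stdm m J t' \<union> {u \<in> stdm (Suc m) I' t'. 0 < u (Suc m)}"
    proof (cases "u (Suc m) = 0")
      case True
      then have "u \<in> mons (Suc m) \<longleftrightarrow> u \<in> mons m" using mons_Suc_iff by blast
      moreover have "mdeg (Suc m) u = mdeg m u" using True mdeg_Suc[of m u] by simp
      moreover have "u \<in> J \<longleftrightarrow> u \<in> I'" using True Jdef by simp
      ultimately show ?thesis using True by (simp add: stdm_iff)
    next
      case False
      have "u \<notin> mons m"
      proof
        assume "u \<in> mons m"
        then have "u (Suc m) = 0" by (rule mons_m_zero)
        then show False using False by simp
      qed
      then show ?thesis using False by (simp add: stdm_iff)
    qed
  qed
  have disj: "stdm m J t' \<inter> {u \<in> stdm (Suc m) I' t'. 0 < u (Suc m)} = {}"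
  proof (rule ccontr)
    assume "stdm m J t' \<inter> {u \<in> stdm (Suc m) I' t'. 0 < u (Suc m)} \<noteq> {}"
    then obtain x where "x \<in> mons m" "0 < x (Suc m)" by (auto simp: stdm_iff)
    then show False using mons_m_zero[of x m] by simp
  qed
  show ?thesis
    unfolding hilb_fun_stdm
    by (subst split, rule card_Un_disjoint) (use disj finite_stdm in auto)
qed

lemma count_zero:
  assumes Jdef: "J = {u \<in> I'. u (Suc m) = 0}"
  shows "hilb_fun (Suc m) I' 0 = hilb_fun m J 0"
proof -
  have e: "{u \<in> stdm (Suc m) I' 0. 0 < u (Suc m)} = {}"
  proof (rule ccontr)
    assume "{u \<in> stdm (Suc m) I' 0. 0 < u (Suc m)} \<noteq> {}"
    then obtain u where "u \<in> mons (Suc m)" "mdeg (Suc m) u = 0" "0 < u (Suc m)"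
      by (auto simp: stdm_iff)
    then show False using mons_le[of u "Suc m" "Suc m"] by simp
  qed
  show ?thesis using count_split[OF Jdef, of 0] unfolding e by simp
qed

lemma count_succ:
  assumes hyp: "\<forall>u\<in>mons (Suc m). 0 < u (Suc m) \<longrightarrow> (u \<in> I' \<longleftrightarrow> u(Suc m := u (Suc m) - 1) \<in> I')"
  shows "card {u \<in> stdm (Suc m) I' (Suc t). 0 < u (Suc m)} = hilb_fun (Suc m) I' t"
proof -
  define sh where "sh = (\<lambda>u::nat\<Rightarrow>nat. u(Suc m := u (Suc m) + 1))"
  have inj: "inj_on sh (stdm (Suc m) I' t)"
  proof (rule inj_onI)
    fix u v assume "sh u = sh v"
    then have "(sh u)(Suc m := sh u (Suc m) - 1) = (sh v)(Suc m := sh v (Suc m) - 1)" by simp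
    then show "u = v" unfolding sh_def by simp
  qed
  have img: "{u \<in> stdm (Suc m) I' (Suc t). 0 < u (Suc m)} = sh ` stdm (Suc m) I' t"
  proof
    show "sh ` stdm (Suc m) I' t \<subseteq> {u \<in> stdm (Suc m) I' (Suc t). 0 < u (Suc m)}"
    proof
      fix x assume "x \<in> sh ` stdm (Suc m) I' t"
      then obtain u where u: "u \<in> stdm (Suc m) I' t" and x: "x = sh u" by blast
      have um: "u \<in> mons (Suc m)" "mdeg (Suc m) u = t" "u \<notin> I'" using u by (auto simp: stdm_iff)
      have xm: "x \<in> mons (Suc m)" using um(1) unfolding x sh_def mons_def by simp
      have "mdeg (Suc m) x + u (Suc m) = mdeg (Suc m) u + (u (Suc m) + 1)"
        unfolding x sh_def by (rule mdeg_upd) simp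
      then have xd: "mdeg (Suc m) x = Suc t" using um(2) by simp
      have xp: "0 < x (Suc m)" unfolding x sh_def by simp
      have "x(Suc m := x (Suc m) - 1) = u" unfolding x sh_def by simp
      then have "x \<notin> I'" using hyp xm xp um(3) by auto
      then show "x \<in> {u \<in> stdm (Suc m) I' (Suc t). 0 < u (Suc m)}"
        using xm xd xp by (simp add: stdm_iff)
    qed
    show "{u \<in> stdm (Suc m) I' (Suc t). 0 < u (Suc m)} \<subseteq> sh ` stdm (Suc m) I' t"
    proof
      fix x assume x: "x \<in> {u \<in> stdm (Suc m) I' (Suc t). 0 < u (Suc m)}"
      define u where "u = x(Suc m := x (Suc m) - 1)"
      have xm: "x \<in> mons (Suc m)" and xd: "mdeg (Suc m) x = Suc t" and xp: "0 < x (Suc m)"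
        and xI: "x \<notin> I'" using x by (auto simp: stdm_iff)
      have um: "u \<in> mons (Suc m)" using xm unfolding u_def mons_def by simp
      have "mdeg (Suc m) u + x (Suc m) = mdeg (Suc m) x + (x (Suc m) - 1)"
        unfolding u_def by (rule mdeg_upd) simp
      then have ud: "mdeg (Suc m) u = t" using xd xp by simp
      have "u \<notin> I'" using hyp xm xp xI unfolding u_def by blast
      then have "u \<in> stdm (Suc m) I' t" using um ud by (simp add: stdm_iff)
      moreover have "sh u = x"
      proof (rule ext)
        fix i show "sh u i = x i" unfolding sh_def u_def using xp by (cases "i = Suc m") auto
      qed
      ultimately show "x \<in> sh ` stdm (Suc m) I' t" by blast
    qed
  qed
  show ?thesis
    unfolding img hilb_fun_stdm by (rule card_image[OF inj])
qed

lemma count_sum: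
  assumes hyp: "\<forall>u\<in>mons (Suc m). 0 < u (Suc m) \<longrightarrow> (u \<in> I' \<longleftrightarrow> u(Suc m := u (Suc m) - 1) \<in> I')"
    and Jdef: "J = {u \<in> I'. u (Suc m) = 0}"
  shows "hilb_fun (Suc m) I' t = (\<Sum>s\<le>t. hilb_fun m J s)"
proof (induction t)
  case 0
  then show ?case using count_zero[OF Jdef] by simp
next
  case (Suc t)
  then show ?case using count_split[OF Jdef, of "Suc t"] count_succ[OF hyp, of t] by simp
qed

lemma gen_down:
  assumes G: "\<forall>u\<in>K. r < mdeg n u \<longrightarrow> (\<exists>i\<le>n. 0 < u i \<and> u(i := u i - 1) \<in> K)"
  shows "u \<in> K \<Longrightarrow> r \<le> d \<Longrightarrow> d \<le> mdeg n u \<Longrightarrow> \<exists>w\<in>K. (\<forall>i. w i \<le> u i) \<and> mdeg n w = d"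
proof (induction "mdeg n u - d" arbitrary: u)
  case 0
  then show ?case by (intro bexI[of _ u]) auto
next
  case (Suc k)
  then have "r < mdeg n u" by linarith
  then obtain i where i: "i \<le> n" "0 < u i" "u(i := u i - 1) \<in> K" using G Suc.prems(1) by blast
  have "mdeg n (u(i := u i - 1)) + u i = mdeg n u + (u i - 1)" by (rule mdeg_upd[OF i(1)])
  then have dd: "mdeg n (u(i := u i - 1)) = mdeg n u - 1" using i(2) by simp
  have "k = mdeg n (u(i := u i - 1)) - d" using Suc.hyps(2) dd by simp
  moreover have "d \<le> mdeg n (u(i := u i - 1))" using Suc.hyps(2) dd by linarith
  ultimately obtain w where w: "w \<in> K" "\<forall>j. w j \<le> (u(i := u i - 1)) j" "mdeg n w = d"
    using Suc.hyps(1)[of "u(i := u i - 1)"] i(3) Suc.prems(2) by blast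
  have "\<forall>j. w j \<le> u j"
  proof
    fix j show "w j \<le> u j" using w(2)[rule_format, of j] by (cases "j = i") auto
  qed
  then show ?case using w by blast
qed

lemma sum_stable:
  assumes "\<And>s. a \<le> s \<Longrightarrow> f s = 0" "a \<le> Suc t"
  shows "(\<Sum>s\<le>t. f s) = (\<Sum>s<a. (f s :: nat))"
  by (rule sum.mono_neutral_right) (use assms in auto)

lemma hb_snoc:
  "hb (xs @ [b]) t = hb xs t + (if length xs \<le> t then (t - length xs + b) choose b else 0)"
proof -
  have "hb (xs @ [b]) t = (\<Sum>j<Suc (length xs). if j \<le> t then (t - j + (xs @ [b]) ! j) choose ((xs @ [b]) ! j) else 0)"
    unfolding hb_def by simp
  also have "\<dots> = (\<Sum>j<length xs. if j \<le> t then (t - j + (xs @ [b]) ! j) choose ((xs @ [b]) ! j) else 0)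
      + (if length xs \<le> t then (t - length xs + b) choose b else 0)"
    by simp
  also have "(\<Sum>j<length xs. if j \<le> t then (t - j + (xs @ [b]) ! j) choose ((xs @ [b]) ! j) else 0) = hb xs t"
    unfolding hb_def by (rule sum.cong) (auto simp: nth_append)
  finally show ?thesis .
qed

lemma hb_zeros: "hb (xs @ replicate c 0) t = hb xs t + min c (Suc t - length xs)"
proof (induction c)
  case 0
  then show ?case by simp
next
  case (Suc c)
  have "xs @ replicate (Suc c) 0 = (xs @ replicate c 0) @ [0]"
    by (simp add: replicate_append_same)
  then have "hb (xs @ replicate (Suc c) 0) t = hb (xs @ replicate c 0) t + (if length xs + c \<le> t then 1 else 0)"
    using hb_snoc[of "xs @ replicate c 0" 0 t] by simp
  then show ?case using Suc by auto
qed

definition good :: "nat \<Rightarrow> (nat \<Rightarrow> nat) set \<Rightarrow> nat list \<Rightarrow> bool" where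
  "good n I bs \<longleftrightarrow> sorted_wrt (\<ge>) bs \<and> (\<forall>t. hb bs t \<le> hilb_fun n I t) \<and>
     (\<forall>t. length bs \<le> Suc t \<longrightarrow> hilb_fun n I t = hb bs t) \<and>
     (\<forall>u\<in>I. length bs < mdeg n u \<longrightarrow> (\<exists>i\<le>n. 0 < u i \<and> u(i := u i - 1) \<in> I))"

lemma mdeg0: "mdeg 0 u = u 0" unfolding mdeg_def by simp

lemma base_case:
  assumes I: "mono_ideal 0 I" and S: "saturated 0 I"
  shows "\<exists>bs. good 0 I bs"
proof (cases "I = {}")
  case True
  have st: "stdm 0 I t = {(\<lambda>i. if i = 0 then t else 0)}" for t
  proof (rule set_eqI)
    fix u
    show "u \<in> stdm 0 I t \<longleftrightarrow> u \<in> {(\<lambda>i. if i = 0 then t else 0)}"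
    proof
      assume "u \<in> stdm 0 I t"
      then have "u \<in> mons 0" "u 0 = t" by (auto simp: stdm_iff mdeg0)
      then have "u = (\<lambda>i. if i = 0 then t else 0)" unfolding mons_def by (auto intro!: ext)
      then show "u \<in> {(\<lambda>i. if i = 0 then t else 0)}" by simp
    next
      assume "u \<in> {(\<lambda>i. if i = 0 then t else 0)}"
      then show "u \<in> stdm 0 I t" using True by (simp add: stdm_iff mdeg0 mons_def)
    qed
  qed
  have "hilb_fun 0 I t = 1" for t unfolding hilb_fun_stdm st by simp
  moreover have "hb [0] t = 1" for t unfolding hb_def by simp
  ultimately have "good 0 I [0]" unfolding good_def using True by simp
  then show ?thesis by blast
next
  case False
  then obtain u where u: "u \<in> I" by blast
  have um: "u \<in> mons 0" using u mono_ideal_sub[OF I] by blast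
  have "\<forall>v\<in>mons 0. mdeg 0 v = u 0 \<longrightarrow> (\<lambda>i. (\<lambda>_. 0::nat) i + v i) \<in> I"
  proof (intro ballI impI)
    fix v assume v: "v \<in> mons 0" "mdeg 0 v = u 0"
    have "v = u"
    proof (rule ext)
      fix i show "v i = u i" using v um unfolding mons_def mdeg0 by (cases "i = 0") auto
    qed
    then show "(\<lambda>i. (\<lambda>_. 0::nat) i + v i) \<in> I" using u by simp
  qed
  then have "(\<lambda>_. 0) \<in> saturation 0 I" using mons_zero unfolding saturation_def by blast
  then have z: "(\<lambda>_. 0) \<in> I" using S unfolding saturated_def by simp
  have Iall: "I = mons 0"
  proof
    show "I \<subseteq> mons 0" by (rule mono_ideal_sub[OF I])
    show "mons 0 \<subseteq> I" using mono_idealD[OF I z] by auto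
  qed
  have "stdm 0 I t = {}" for t unfolding stdm_def Iall by simp
  then have "hilb_fun 0 I t = 0" for t unfolding hilb_fun_stdm by simp
  moreover have "hb [] t = 0" for t unfolding hb_def by simp
  moreover have "\<forall>u\<in>I. 0 < mdeg 0 u \<longrightarrow> (\<exists>i\<le>0. 0 < u i \<and> u(i := u i - 1) \<in> I)"
  proof (intro ballI impI)
    fix u assume "u \<in> I" "0 < mdeg 0 u"
    then have "0 < u 0" "u(0 := u 0 - 1) \<in> I" unfolding Iall mdeg0 mons_def by auto
    then show "\<exists>i\<le>0. 0 < u i \<and> u(i := u i - 1) \<in> I" by blast
  qed
  ultimately have "good 0 I []" unfolding good_def by simp
  then show ?thesis by blast
qed


lemma sorted_desc_replicate: "sorted_wrt (\<ge>) (replicate c (x::nat))"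
  by (induction c) auto

lemma step_case:
  assumes IH: "\<And>K. mono_ideal m K \<Longrightarrow> borel m K \<Longrightarrow> saturated m K \<Longrightarrow> \<exists>bs. good m K bs"
    and I: "mono_ideal (Suc m) I" and B: "borel (Suc m) I" and S: "saturated (Suc m) I"
  shows "\<exists>bs. good (Suc m) I bs"
proof -
  define J where "J = {u \<in> I. u (Suc m) = 0}"
  have Isub: "I \<subseteq> mons (Suc m)" by (rule mono_ideal_sub[OF I])
  have Jsub: "J \<subseteq> mons m"
  proof
    fix u assume "u \<in> J"
    then have "u \<in> mons (Suc m)" "u (Suc m) = 0" using Isub unfolding J_def by auto
    then show "u \<in> mons m" using mons_Suc_iff by blast
  qed
  have Jm: "mono_ideal m J"
    unfolding mono_ideal_def
  proof (intro conjI ballI impI allI)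
    show "J \<subseteq> mons m" by (rule Jsub)
    fix u v assume u: "u \<in> J" and v: "v \<in> mons m" and le: "\<forall>i. u i \<le> v i"
    have "v \<in> mons (Suc m)" "v (Suc m) = 0" using v mons_Suc_iff by blast+
    moreover have "v \<in> I" using mono_idealD[OF I _ \<open>v \<in> mons (Suc m)\<close> le] u unfolding J_def by blast
    ultimately show "v \<in> J" unfolding J_def by blast
  qed
  have Jb: "borel m J"
    unfolding borel_def
  proof (intro ballI allI impI)
    fix u i j assume u: "u \<in> J" and ij: "i < j \<and> j \<le> m \<and> 0 < u j"
    have "u(i := u i + 1, j := u j - 1) \<in> I"
      using B u ij unfolding borel_def J_def by auto
    moreover have "(u(i := u i + 1, j := u j - 1)) (Suc m) = 0" using u ij unfolding J_def by auto
    ultimately show "u(i := u i + 1, j := u j - 1) \<in> J" unfolding J_def by blast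
  qed
  define K where "K = saturation m J"
  have Km: "mono_ideal m K" unfolding K_def by (rule sat_mono[OF Jm])
  have Kb: "borel m K" unfolding K_def by (rule sat_borel[OF Jb Jm])
  have Ks: "saturated m K" unfolding K_def by (rule sat_sat[OF Jm])
  obtain bsK where gK: "good m K bsK" using IH[OF Km Kb Ks] by blast
  define r where "r = length bsK"
  have gK1: "sorted_wrt (\<ge>) bsK" and gK2: "\<And>t. hb bsK t \<le> hilb_fun m K t"
    and gK3: "\<And>t. r \<le> Suc t \<Longrightarrow> hilb_fun m K t = hb bsK t"
    and gK4: "\<forall>u\<in>K. r < mdeg m u \<longrightarrow> (\<exists>i\<le>m. 0 < u i \<and> u(i := u i - 1) \<in> K)"
    using gK unfolding good_def r_def by auto
  have JK: "J \<subseteq> K" unfolding K_def by (rule sat_sup[OF Jm])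
  have Ksub: "K \<subseteq> mons m" by (rule mono_ideal_sub[OF Km])
  have hyp: "\<forall>u\<in>mons (Suc m). 0 < u (Suc m) \<longrightarrow> (u \<in> I \<longleftrightarrow> u(Suc m := u (Suc m) - 1) \<in> I)"
  proof (intro ballI impI iffI)
    fix u assume "u \<in> mons (Suc m)" "0 < u (Suc m)" "u \<in> I"
    then show "u(Suc m := u (Suc m) - 1) \<in> I" using xn_prop[OF I B S] by blast
  next
    fix u assume u: "u \<in> mons (Suc m)" "0 < u (Suc m)" "u(Suc m := u (Suc m) - 1) \<in> I"
    show "u \<in> I" by (rule mono_idealD[OF I u(3) u(1)]) auto
  qed
  have HI: "\<And>t. hilb_fun (Suc m) I t = (\<Sum>s\<le>t. hilb_fun m J s)"
    by (rule count_sum[OF hyp J_def])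
  have stdKJ: "\<And>s. stdm m K s \<subseteq> stdm m J s" using JK unfolding stdm_def by blast
  have HKJ: "\<And>s. hilb_fun m K s \<le> hilb_fun m J s"
    unfolding hilb_fun_stdm by (rule card_mono[OF finite_stdm stdKJ])
  define P where "P s \<longleftrightarrow> (\<forall>w\<in>K. mdeg m w = s \<longrightarrow> w \<in> J)" for s
  have PD: "hilb_fun m J s = hilb_fun m K s" if "P s" for s
  proof -
    have "stdm m J s \<subseteq> stdm m K s"
    proof
      fix u assume u: "u \<in> stdm m J s"
      then have "u \<notin> K" using that unfolding P_def stdm_def by blast
      then show "u \<in> stdm m K s" using u unfolding stdm_def by blast
    qed
    then have "stdm m J s = stdm m K s" using stdKJ by blast
    then show ?thesis unfolding hilb_fun_stdm by simp
  qed
  have nPD: "hilb_fun m K s < hilb_fun m J s" if np: "\<not> P s" for s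
  proof -
    obtain w where w: "w \<in> K" "mdeg m w = s" "w \<notin> J" using np unfolding P_def by blast
    then have "w \<in> stdm m J s" "w \<notin> stdm m K s" using Ksub unfolding stdm_def by auto
    then have "stdm m K s \<subset> stdm m J s" using stdKJ by blast
    then show ?thesis unfolding hilb_fun_stdm by (rule psubset_card_mono[OF finite_stdm])
  qed
  have Pup: "P s'" if h: "r \<le> s" "P s" "s \<le> s'" for s s'
    unfolding P_def
  proof (intro ballI impI)
    fix w assume w: "w \<in> K" "mdeg m w = s'"
    obtain w' where w': "w' \<in> K" "\<forall>i. w' i \<le> w i" "mdeg m w' = s"
      using gen_down[OF gK4 w(1) h(1)] h w by auto
    then have "w' \<in> J" using h(2) unfolding P_def by blast
    then show "w \<in> J" using mono_idealD[OF Jm _ _ w'(2)] w Ksub by blast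
  qed
  have Pex: "\<exists>T. r \<le> T \<and> P T"
  proof -
    define KR where "KR = {u \<in> K. mdeg m u = r}"
    have finKR: "finite KR"
      by (rule finite_subset[OF _ finite_monsd[of m r]]) (use Ksub in \<open>auto simp: KR_def monsd_def\<close>)
    have "\<forall>u\<in>KR. \<exists>k. \<forall>v\<in>mons m. mdeg m v = k \<longrightarrow> (\<lambda>i. u i + v i) \<in> J"
      unfolding KR_def K_def saturation_def by blast
    from bchoice[OF this] obtain kf where
      kf: "\<forall>u\<in>KR. \<forall>v\<in>mons m. mdeg m v = kf u \<longrightarrow> (\<lambda>i. u i + v i) \<in> J" by blast
    define Kt where "Kt = (\<Sum>u\<in>KR. kf u)"
    have "P (r + Kt)"
      unfolding P_def
    proof (intro ballI impI)
      fix w assume w: "w \<in> K" "mdeg m w = r + Kt"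
      obtain u where u: "u \<in> K" "\<forall>i. u i \<le> w i" "mdeg m u = r"
        using gen_down[OF gK4 w(1), of r] w by auto
      have uKR: "u \<in> KR" using u unfolding KR_def by blast
      define v where "v = (\<lambda>i. w i - u i)"
      have wuv: "w = (\<lambda>i. u i + v i)"
      proof (rule ext)
        fix i show "w i = u i + v i" using u(2)[rule_format, of i] unfolding v_def by simp
      qed
      have wm: "w \<in> mons m" using w Ksub by blast
      have um: "u \<in> mons m" using u Ksub by blast
      have vm: "v \<in> mons m" using wm unfolding v_def mons_def by simp
      have vd: "mdeg m v = Kt" using w u mdeg_add[of m u v] wuv by simp
      have "kf u \<le> Kt" unfolding Kt_def by (rule member_le_sum[OF uKR _ finKR]) simp
      then have "(\<lambda>i. u i + v i) \<in> J"
        using sat_up[OF Jm um, of "kf u" Kt v] kf uKR vm vd by blast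
      then show "w \<in> J" using wuv by simp
    qed
    then show ?thesis by (intro exI[of _ "r + Kt"]) simp
  qed
  define T0 where "T0 = (LEAST s. r \<le> s \<and> P s)"
  have T0: "r \<le> T0" "P T0" using LeastI_ex[OF Pex] unfolding T0_def by auto
  have T0min: "\<not> P s" if "r \<le> s" "s < T0" for s
    using not_less_Least[of s "\<lambda>s. r \<le> s \<and> P s"] that unfolding T0_def by blast
  define D where "D s = hilb_fun m J s - hilb_fun m K s" for s
  define e where "e s = hilb_fun m K s - hb bsK s" for s
  have HJ: "hilb_fun m J s = hb bsK s + e s + D s" for s
    using HKJ[of s] gK2[of s] unfolding D_def e_def by simp
  have e0: "e s = 0" if "r \<le> s" for s using gK3[of s] that unfolding e_def by simp
  have D0: "D s = 0" if "T0 \<le> s" for s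
    using PD[OF Pup[OF T0(1) T0(2) that]] unfolding D_def by simp
  have D1: "1 \<le> D s" if "r \<le> s" "s < T0" for s
    using nPD[OF T0min[OF that]] unfolding D_def by simp
  define E where "E = (\<Sum>s<r. e s)"
  define F where "F = (\<Sum>s<T0. D s)"
  define c where "c = E + F"
  have sumE: "(\<Sum>s\<le>t. e s) = E" if "r \<le> Suc t" for t
    unfolding E_def by (rule sum_stable[OF e0 that])
  have sumF: "(\<Sum>s\<le>t. D s) = F" if "T0 \<le> Suc t" for t
    unfolding F_def by (rule sum_stable[OF D0 that])
  have lowD: "Suc t - r \<le> (\<Sum>s\<le>t. D s)" if "Suc t \<le> T0" for t
  proof -
    have "Suc t - r = (\<Sum>s\<in>{r..t}. (1::nat))" by simp
    also have "\<dots> \<le> (\<Sum>s\<in>{r..t}. D s)" by (rule sum_mono) (use D1 that in auto)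
    also have "\<dots> \<le> (\<Sum>s\<le>t. D s)" by (rule sum_mono2) auto
    finally show ?thesis .
  qed
  have FT: "T0 - r \<le> F"
  proof -
    have "T0 - r = (\<Sum>s\<in>{r..<T0}. (1::nat))" by simp
    also have "\<dots> \<le> (\<Sum>s\<in>{r..<T0}. D s)" by (rule sum_mono) (use D1 in auto)
    also have "\<dots> \<le> F" unfolding F_def by (rule sum_mono2) auto
    finally show ?thesis .
  qed
  define bs where "bs = map Suc bsK @ replicate c 0"
  have hbI: "hb bs t = hb (map Suc bsK) t + min c (Suc t - r)" for t
    unfolding bs_def using hb_zeros[of "map Suc bsK" c t] r_def by simp
  have HIt: "hilb_fun (Suc m) I t = hb (map Suc bsK) t + (\<Sum>s\<le>t. e s) + (\<Sum>s\<le>t. D s)" for t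
    unfolding HI HJ by (simp add: sum.distrib hb_sum)
  have lenbs: "length bs = r + c" unfolding bs_def r_def by simp
  have c1: "hb bs t \<le> hilb_fun (Suc m) I t" for t
  proof (cases "T0 \<le> Suc t")
    case True
    then show ?thesis using hbI[of t] HIt[of t] sumE[of t] sumF[of t] T0(1) unfolding c_def by simp
  next
    case False
    then show ?thesis using hbI[of t] HIt[of t] lowD[of t] by simp
  qed
  have c2: "hilb_fun (Suc m) I t = hb bs t" if "length bs \<le> Suc t" for t
  proof -
    have "T0 \<le> r + c" using FT T0(1) unfolding c_def by simp
    then show ?thesis using that lenbs hbI[of t] HIt[of t] sumE[of t] sumF[of t] unfolding c_def by simp
  qed
  have c3: "\<forall>u\<in>I. length bs < mdeg (Suc m) u \<longrightarrow> (\<exists>i\<le>Suc m. 0 < u i \<and> u(i := u i - 1) \<in> I)"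
  proof (intro ballI impI)
    fix u assume u: "u \<in> I" and deg: "length bs < mdeg (Suc m) u"
    show "\<exists>i\<le>Suc m. 0 < u i \<and> u(i := u i - 1) \<in> I"
    proof (cases "0 < u (Suc m)")
      case True
      then show ?thesis using xn_prop[OF I B S u] by blast
    next
      case False
      then have uJ: "u \<in> J" using u unfolding J_def by simp
      have md: "mdeg m u = mdeg (Suc m) u" using False mdeg_Suc[of m u] by simp
      have "r < mdeg m u" using deg md lenbs by simp
      then obtain i where i: "i \<le> m" "0 < u i" "u(i := u i - 1) \<in> K"
        using gK4 JK uJ by blast
      have "mdeg m (u(i := u i - 1)) + u i = mdeg m u + (u i - 1)" by (rule mdeg_upd[OF i(1)])
      then have "mdeg m (u(i := u i - 1)) = mdeg m u - 1" using i(2) by simp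
      moreover have "T0 \<le> r + c" using FT T0(1) unfolding c_def by simp
      ultimately have "T0 \<le> mdeg m (u(i := u i - 1))" using deg md lenbs by simp
      then have "P (mdeg m (u(i := u i - 1)))" using Pup[OF T0(1) T0(2)] by blast
      then have "u(i := u i - 1) \<in> J" using i(3) unfolding P_def by blast
      then have "u(i := u i - 1) \<in> I" unfolding J_def by blast
      moreover have "i \<le> Suc m" using i(1) by simp
      ultimately show ?thesis using i(2) by blast
    qed
  qed
  have c0: "sorted_wrt (\<ge>) bs"
    unfolding bs_def using gK1 sorted_desc_replicate[of c 0]
    by (auto simp: sorted_wrt_append sorted_wrt_map)
  have "good (Suc m) I bs" unfolding good_def using c0 c1 c2 c3 by blast
  then show ?thesis by blast
qed

lemma main_lemma: "mono_ideal n I \<Longrightarrow> borel n I \<Longrightarrow> saturated n I \<Longrightarrow> \<exists>bs. good n I bs"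
proof (induction n arbitrary: I)
  case 0
  then show ?case using base_case by blast
next
  case (Suc m)
  show ?case by (rule step_case[OF _ Suc.prems]) (use Suc.IH in blast)
qed

theorem lemma5p9:
  fixes n :: nat and I :: "(nat \<Rightarrow> nat) set"
  assumes "mono_ideal n I" and "proper_ideal n I" and "saturated n I" and "borel n I"
  shows "\<exists>j::nat. hilb_poly (Suc n) (ext_ideal n I) = (sigma_poly ^^ j) (lam_poly (hilb_poly n I))"
proof -
  have Im: "mono_ideal n I" by (rule assms(1))
  obtain bs where g: "good n I bs" using main_lemma[OF assms(1) assms(4) assms(3)] by blast
  define r where "r = length bs"
  have g1: "sorted_wrt (\<ge>) bs" and g2: "\<And>t. hb bs t \<le> hilb_fun n I t"
    and g3: "\<And>t. r \<le> Suc t \<Longrightarrow> hilb_fun n I t = hb bs t"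
    using g unfolding good_def r_def by auto
  have hP: "hilb_poly n I = Gz bs"
  proof (rule hilb_poly_eq[of r])
    fix t assume "r \<le> t"
    then have "length bs \<le> Suc t" unfolding r_def by simp
    then show "poly (Gz bs) (of_nat t) = of_nat (hilb_fun n I t)"
      using Gz_eval[of bs t] g3[of t] r_def by simp
  qed
  have lam: "lam_poly (hilb_poly n I) = Gl bs" unfolding hP by (rule lam_Gz[OF g1])
  have Isub: "I \<subseteq> mons n" by (rule mono_ideal_sub[OF Im])
  have hyp: "\<forall>u\<in>mons (Suc n). 0 < u (Suc n) \<longrightarrow>
      (u \<in> ext_ideal n I \<longleftrightarrow> u(Suc n := u (Suc n) - 1) \<in> ext_ideal n I)"
  proof (intro ballI impI iffI)
    fix u assume u: "u \<in> mons (Suc n)" "0 < u (Suc n)" "u \<in> ext_ideal n I"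
    then obtain v where v: "v \<in> I" "\<forall>i. v i \<le> u i" unfolding ext_ideal_def by blast
    have "v (Suc n) = 0" using v(1) Isub unfolding mons_def by auto
    then have "\<forall>i. v i \<le> (u(Suc n := u (Suc n) - 1)) i" using v(2) by auto
    moreover have "u(Suc n := u (Suc n) - 1) \<in> mons (Suc n)" using u(1) unfolding mons_def by simp
    ultimately show "u(Suc n := u (Suc n) - 1) \<in> ext_ideal n I"
      using v(1) unfolding ext_ideal_def by blast
  next
    fix u assume u: "u \<in> mons (Suc n)" "0 < u (Suc n)" "u(Suc n := u (Suc n) - 1) \<in> ext_ideal n I"
    then obtain v where v: "v \<in> I" "\<forall>i. v i \<le> (u(Suc n := u (Suc n) - 1)) i"
      unfolding ext_ideal_def by blast
    have "\<forall>i. v i \<le> u i"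
    proof
      fix i show "v i \<le> u i" using v(2)[rule_format, of i] by (cases "i = Suc n") auto
    qed
    then show "u \<in> ext_ideal n I" using u(1) v(1) unfolding ext_ideal_def by blast
  qed
  have Jeq: "I = {u \<in> ext_ideal n I. u (Suc n) = 0}"
  proof (rule set_eqI, rule iffI)
    fix u assume u: "u \<in> I"
    then have "u \<in> mons n" using Isub by blast
    then have "u \<in> mons (Suc n)" "u (Suc n) = 0" using mons_Suc_iff by blast+
    then show "u \<in> {u \<in> ext_ideal n I. u (Suc n) = 0}"
      using u unfolding ext_ideal_def by auto
  next
    fix u assume u: "u \<in> {u \<in> ext_ideal n I. u (Suc n) = 0}"
    then obtain v where v: "v \<in> I" "\<forall>i. v i \<le> u i" "u \<in> mons (Suc n)" "u (Suc n) = 0"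
      unfolding ext_ideal_def by blast
    then have "u \<in> mons n" using mons_Suc_iff by blast
    then show "u \<in> I" using mono_idealD[OF Im v(1) _ v(2)] by blast
  qed
  have HE: "hilb_fun (Suc n) (ext_ideal n I) t = (\<Sum>s\<le>t. hilb_fun n I s)" for t
    by (rule count_sum[OF hyp Jeq])
  define d where "d s = hilb_fun n I s - hb bs s" for s
  define j where "j = (\<Sum>s<r. d s)"
  have HIs: "hilb_fun n I s = hb bs s + d s" for s using g2[of s] unfolding d_def by simp
  have d0: "d s = 0" if "r \<le> s" for s using g3[of s] that unfolding d_def by simp
  have HE2: "hilb_fun (Suc n) (ext_ideal n I) t = hb (map Suc bs) t + j" if "r \<le> Suc t" for t
    unfolding HE HIs sum.distrib hb_sum j_def using sum_stable[OF d0 that] by simp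
  have "hilb_poly (Suc n) (ext_ideal n I) = of_nat j + Gl bs"
  proof (rule hilb_poly_eq[of r])
    fix t assume "r \<le> t"
    then have "length bs \<le> Suc t" "r \<le> Suc t" unfolding r_def by simp_all
    then show "poly (of_nat j + Gl bs) (of_nat t) = of_nat (hilb_fun (Suc n) (ext_ideal n I) t)"
      using Gl_eval[of bs t] HE2[of t] by simp
  qed
  then have "hilb_poly (Suc n) (ext_ideal n I) = (sigma_poly ^^ j) (lam_poly (hilb_poly n I))"
    unfolding lam sigma_pow by simp
  then show ?thesis by blast
qed

end
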